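(* Let $R$ be a ring with identity and involution $*$, and let $a,b\in R$ be core invertible with core inverses $a^{\oplus}$ and $b^{\oplus}$. If $ab=0=ba$ and $a^*b=0$, then $a+b$ is core invertible and $(a+b)^{\oplus}=a^{\oplus}+b^{\oplus}$.
   Context: An involution on $R$ satisfies $(a^* )^*=a$, $(ab)^*=b^*a^*$, $(a+b)^*=a^*+b^*$. An element $x\in R$ is a core inverse of $a$ if $axa=a$, $xR=aR$ and $Rx=Ra^*$; it is unique when it exists and is denoted $a^{\oplus}$. *)

theory Defs
  imports Main
begin

definition involution :: "('a::ring_1 \<Rightarrow> 'a) \<Rightarrow> bool" where
  "involution s \<longleftrightarrow> (\<forall>a. s (s a) = a) \<and> (\<forall>a b. s (a * b) = s b * s a)
     \<and> (\<forall>a b. s (a + b) = s a + s b)"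

definition right_ideal :: "'a::ring_1 \<Rightarrow> 'a set" where
  "right_ideal x = {x * r | r. True}"

definition left_ideal :: "'a::ring_1 \<Rightarrow> 'a set" where
  "left_ideal x = {r * x | r. True}"

definition is_core_inverse :: "('a::ring_1 \<Rightarrow> 'a) \<Rightarrow> 'a \<Rightarrow> 'a \<Rightarrow> bool" where
  "is_core_inverse s a x \<longleftrightarrow> a * x * a = a \<and> right_ideal x = right_ideal a
     \<and> left_ideal x = left_ideal (s a)"

definition core_invertible :: "('a::ring_1 \<Rightarrow> 'a) \<Rightarrow> 'a \<Rightarrow> bool" where
  "core_invertible s a \<longleftrightarrow> (\<exists>x. is_core_inverse s a x)"

text \<open>The core inverse (unique when it exists).\<close>
definition core_inv :: "('a::ring_1 \<Rightarrow> 'a) \<Rightarrow> 'a \<Rightarrow> 'a" where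
  "core_inv s a = (THE x. is_core_inverse s a x)"

end

theory Submission
  imports Defs
begin

lemma inv_props:
  assumes "involution s"
  shows "s (s a) = a" "s (a * b) = s b * s a" "s (a + b) = s a + s b" "s 0 = 0"
proof -
  show 1: "s (s a) = a" "s (a * b) = s b * s a" "s (a + b) = s a + s b"
    using assms by (auto simp: involution_def)
  have "\<forall>a b. s (a + b) = s a + s b" using assms by (simp add: involution_def)
  then have "s (0 + 0) = s 0 + s 0" by blast
  then show "s 0 = 0" by simp
qed

lemma core_props:
  assumes inv: "involution s" and c: "is_core_inverse s a x"
  shows "a * x * a = a" "x * a * x = x" "s (a * x) = a * x" "x * (a * a) = a"
    "a * (x * x) = x" "x = x * s x * s a" "s a = s a * a * x"
    "\<exists>w. x = w * s a" "\<exists>u. x = a * u"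
proof -
  have axa: "a * x * a = a" using c by (simp add: is_core_inverse_def)
  have "x \<in> right_ideal x" unfolding right_ideal_def by (metis (mono_tags) mem_Collect_eq mult_1_right)
  then have "x \<in> right_ideal a" using c by (simp add: is_core_inverse_def)
  then obtain u where u: "x = a * u" by (auto simp: right_ideal_def)
  have "a \<in> right_ideal a" unfolding right_ideal_def by (metis (mono_tags) mem_Collect_eq mult_1_right)
  then have "a \<in> right_ideal x" using c by (simp add: is_core_inverse_def)
  then obtain v where v: "a = x * v" by (auto simp: right_ideal_def)
  have "x \<in> left_ideal x" unfolding left_ideal_def by (metis (mono_tags) mem_Collect_eq mult_1_left)
  then have "x \<in> left_ideal (s a)" using c by (simp add: is_core_inverse_def)
  then obtain w where w: "x = w * s a" by (auto simp: left_ideal_def)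
  note I = inv_props[OF inv]
  have "s a = s (a * x * a)" using axa by simp
  also have "\<dots> = s a * s x * s a" by (simp add: I mult.assoc)
  finally have sa: "s a = s a * s x * s a" .
  have "x = w * (s a * s x * s a)" using w sa by simp
  also have "\<dots> = x * s x * s a" using w by (simp add: mult.assoc)
  finally have x1: "x = x * s x * s a" .
  have ax: "a * x = (a * x) * s (a * x)"
  proof -
    have "a * x = a * (x * s x * s a)" using x1 by simp
    also have "\<dots> = (a * x) * s (a * x)" by (simp add: I mult.assoc)
    finally show ?thesis .
  qed
  have herm: "s (a * x) = a * x"
  proof -
    have "s (a * x) = s ((a * x) * s (a * x))" using ax by simp
    also have "\<dots> = (a * x) * s (a * x)" by (simp add: I mult.assoc)
    finally show ?thesis using ax by simp
  qed
  have sa2: "s a * (a * x) = s a"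
  proof -
    have "s a * (a * x) = s a * s (a * x)" using herm by simp
    also have "\<dots> = s (a * x * a)" by (simp add: I mult.assoc)
    finally show ?thesis using axa by simp
  qed
  have xax: "x * a * x = x"
  proof -
    have "x * a * x = w * (s a * (a * x))" using w by (simp add: mult.assoc)
    then show ?thesis using sa2 w by simp
  qed
  show "a * x * a = a" "x * a * x = x" "s (a * x) = a * x" "x = x * s x * s a" by fact+
  show "x * (a * a) = a"
  proof -
    have "x * (a * a) = x * a * x * v" using v by (simp add: mult.assoc)
    then show ?thesis using xax v by simp
  qed
  show "a * (x * x) = x"
  proof -
    have "a * (x * x) = a * x * a * u" using u by (simp add: mult.assoc)
    then show ?thesis using axa u by simp
  qed
  show "s a = s a * a * x" using sa2 by (simp add: mult.assoc)
  show "\<exists>w. x = w * s a" using w by blast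
  show "\<exists>u. x = a * u" using u by blast
qed

lemma core_unique:
  assumes inv: "involution s" and c1: "is_core_inverse s a x1" and c2: "is_core_inverse s a x2"
  shows "x1 = x2"
proof -
  note P1 = core_props[OF inv c1] and P2 = core_props[OF inv c2] and I = inv_props[OF inv]
  have "a * x1 = (a * x2 * a) * x1" using P2(1) by simp
  also have "\<dots> = s (a * x2) * s (a * x1)" using P1(3) P2(3) by (simp add: mult.assoc)
  also have "\<dots> = s (a * x1 * (a * x2))" by (simp add: I)
  also have "\<dots> = s (a * x2)" using P1(1) by (simp add: mult.assoc[symmetric])
  also have "\<dots> = a * x2" by (rule P2(3))
  finally have e: "a * x1 = a * x2" .
  obtain u where u: "x2 = a * u" using P2(9) by blast
  have "x1 = x1 * (a * x1)" using P1(2) by (simp add: mult.assoc)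
  also have "\<dots> = x1 * (a * a) * u" using e u by (simp add: mult.assoc)
  also have "\<dots> = x2" using P1(4) u by simp
  finally show ?thesis .
qed

theorem corollary4p7:
  fixes s :: "'a::ring_1 \<Rightarrow> 'a" and a b :: 'a
  assumes "involution s"
    and "core_invertible s a" and "core_invertible s b"
    and "a * b = 0" and "b * a = 0" and "s a * b = 0"
  shows "core_invertible s (a + b) \<and> core_inv s (a + b) = core_inv s a + core_inv s b"
proof -
  note inv = assms(1) and I = inv_props[OF assms(1)]
  obtain x where cx: "is_core_inverse s a x" using assms(2) by (auto simp: core_invertible_def)
  obtain y where cy: "is_core_inverse s b y" using assms(3) by (auto simp: core_invertible_def)
  have xa: "core_inv s a = x" unfolding core_inv_def
    using cx core_unique[OF inv] by blast
  have yb: "core_inv s b = y" unfolding core_inv_def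
    using cy core_unique[OF inv] by blast
  note X = core_props[OF inv cx] and Y = core_props[OF inv cy]
  have ab: "a * b = 0" "b * a = 0" "s a * b = 0" by fact+
  have "s b * a = s (s a * b)" by (simp add: I)
  then have sba: "s b * a = 0" using ab(3) I(4) by simp
  obtain w where w: "x = w * s a" using X(8) by blast
  obtain u where u: "x = a * u" using X(9) by blast
  obtain w' where w': "y = w' * s b" using Y(8) by blast
  obtain u' where u': "y = b * u'" using Y(9) by blast
  have xb: "x * b = 0" using w ab(3) by (simp add: mult.assoc)
  have ay: "a * y = 0" using u' ab(1) by (simp add: mult.assoc[symmetric])
  have bx: "b * x = 0" using u ab(2) by (simp add: mult.assoc[symmetric])
  have ya: "y * a = 0" using w' sba by (simp add: mult.assoc)
  have "s b * s x = s (x * b)" by (simp add: I)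
  then have sbx: "s x * s b = 0" using bx I by (metis)
  have "s a * s y = s (y * a)" by (simp add: I)
  then have say: "s y * s a = 0" using ay I by metis
  have c: "is_core_inverse s (a + b) (x + y)"
    unfolding is_core_inverse_def
  proof (intro conjI)
    have "(a + b) * (x + y) * (a + b) = a * x * a + a * x * b + a * y * (a + b) + b * x * (a + b) + b * y * a + b * y * b"
      by (simp add: algebra_simps)
    also have "\<dots> = a + b" using X(1) Y(1) ay bx xb ya by (simp add: mult.assoc)
    finally show "(a + b) * (x + y) * (a + b) = a + b" .
  next
    have "(a + b) * (x * x + y * y) = a * (x * x) + (a * y) * y + (b * x) * x + b * (y * y)"
      by (simp add: algebra_simps)
    then have e1: "x + y = (a + b) * (x * x + y * y)" using X(5) Y(5) ay bx by simp
    have "(x + y) * (a * a + b * b) = x * (a * a) + (x * b) * b + (y * a) * a + y * (b * b)"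
      by (simp add: algebra_simps)
    then have e2: "a + b = (x + y) * (a * a + b * b)" using X(4) Y(4) xb ya by simp
    show "right_ideal (x + y) = right_ideal (a + b)"
      unfolding right_ideal_def
    proof (intro set_eqI iffI)
      fix z assume "z \<in> {(x + y) * r |r. True}"
      then obtain r where "z = (x + y) * r" by blast
      then have "z = (a + b) * ((x * x + y * y) * r)" using e1 by (simp add: mult.assoc)
      then show "z \<in> {(a + b) * r |r. True}" by blast
    next
      fix z assume "z \<in> {(a + b) * r |r. True}"
      then obtain r where "z = (a + b) * r" by blast
      then have "z = (x + y) * ((a * a + b * b) * r)" using e2 by (metis mult.assoc)
      then show "z \<in> {(x + y) * r |r. True}" by blast
    qed
  next
    have "(x * s x + y * s y) * (s a + s b) = x * s x * s a + x * (s x * s b) + y * (s y * s a) + y * s y * s b"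
      by (simp add: algebra_simps)
    then have e1: "x + y = (x * s x + y * s y) * s (a + b)"
      using X(6) Y(6) sbx say I(3) by simp
    have "(s a * a + s b * b) * (x + y) = s a * a * x + s a * (a * y) + s b * (b * x) + s b * b * y"
      by (simp add: algebra_simps)
    then have e2: "s (a + b) = (s a * a + s b * b) * (x + y)"
      using X(7) Y(7) ay bx I(3) by simp
    show "left_ideal (x + y) = left_ideal (s (a + b))"
      unfolding left_ideal_def
    proof (intro set_eqI iffI)
      fix z assume "z \<in> {r * (x + y) |r. True}"
      then obtain r where "z = r * (x + y)" by blast
      then have "z = (r * (x * s x + y * s y)) * s (a + b)" using e1 by (metis mult.assoc)
      then show "z \<in> {r * s (a + b) |r. True}" by blast
    next
      fix z assume "z \<in> {r * s (a + b) |r. True}"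
      then obtain r where "z = r * s (a + b)" by blast
      then have "z = (r * (s a * a + s b * b)) * (x + y)" using e2 by (metis mult.assoc)
      then show "z \<in> {r * (x + y) |r. True}" by blast
    qed
  qed
  have "core_inv s (a + b) = x + y" unfolding core_inv_def
    using c core_unique[OF inv] by blast
  with c xa yb show ?thesis by (auto simp: core_invertible_def)
qed

end
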